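(* (i) If $z_0=(x_0,y_0)$ with $y_0\ne0$ has a $\mathbf{W}$-orbit defined for all $k$ and converging to $p_0$, then there are constants $c,C>0$ such that $c|y_k|^2\le|y_{k+1}|\le C|y_k|^2$ for all $k$, where $z_k=(x_k,y_k)$; i.e. convergence is strictly quadratic. (ii) If $z_0\in R$ with $y_0\neq 0$ has a $\mathbf{W}$-orbit defined for all $k$ and converging to a point $(x_*,0)$ with $x_*\neq 2$, then there are constants $c,C>0$ such that $c|y_k|^3\le|y_{k+1}|\le C|y_k|^3$ for all $k$; i.e. convergence is strictly cubic.
   Context: For $x>0$, $y\in\mathbb{R}$ let $r_1^2=4+x^2+4x^2y^2$, $\Delta=((x+2)^2+8x^2y^2)((x-2)^2+8x^2y^2)$ and $\omega_\pm(x,y)=\frac{x^2-4\pm\sqrt{\Delta}}{2r_1^2}$. Let $p_0=(2,0)$, $R=\{(x,y): x>0,\ 4-4y^2-x^2y^2-8x^2y^4\ge 0\}$, $R_+=R\cap((0,2]\times\mathbb{R})$, $R_-=R\cap([2,\infty)\times\mathbb{R})$, $r$ the line $x=2$. $\mathbf{W}_\pm(x,y)=\left(\frac{1+\omega_\pm}{1-\omega_\pm}x,\ \frac{|\omega_\pm|}{1+\omega_\pm}y\right)$ on $R_\pm$; $\mathbf{W}=\mathbf{W}_+$ for $x<2$, $\mathbf{W}=\mathbf{W}_-$ for $x>2$, $\mathbf{W}(p_0)=p_0$. The $\mathbf{W}$-orbit of $z_0$ is $z_{k+1}=\mathbf{W}(z_k)$, defined as long as no $z_k$ lies on $r\setminus\{p_0\}$.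 *)

theory Defs
  imports "HOL-Analysis.Analysis"
begin

definition r1sq :: "real \<Rightarrow> real \<Rightarrow> real" where
  "r1sq x y = 4 + x^2 + 4 * x^2 * y^2"

definition Delta :: "real \<Rightarrow> real \<Rightarrow> real" where
  "Delta x y = ((x + 2)^2 + 8 * x^2 * y^2) * ((x - 2)^2 + 8 * x^2 * y^2)"

definition omega_plus :: "real \<Rightarrow> real \<Rightarrow> real" where
  "omega_plus x y = (x^2 - 4 + sqrt (Delta x y)) / (2 * r1sq x y)"

definition omega_minus :: "real \<Rightarrow> real \<Rightarrow> real" where
  "omega_minus x y = (x^2 - 4 - sqrt (Delta x y)) / (2 * r1sq x y)"

definition p0 :: "real \<times> real" where
  "p0 = (2, 0)"

definition regionR :: "(real \<times> real) set" where
  "regionR = {(x, y). x > 0 \<and> 4 - 4 * y^2 - x^2 * y^2 - 8 * x^2 * y^4 \<ge> 0}"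

definition W_gen :: "(real \<Rightarrow> real \<Rightarrow> real) \<Rightarrow> real \<times> real \<Rightarrow> real \<times> real" where
  "W_gen om z = (case z of (x, y) \<Rightarrow>
      ((1 + om x y) / (1 - om x y) * x, \<bar>om x y\<bar> / (1 + om x y) * y))"

definition W_plus :: "real \<times> real \<Rightarrow> real \<times> real" where
  "W_plus = W_gen omega_plus"

definition W_minus :: "real \<times> real \<Rightarrow> real \<times> real" where
  "W_minus = W_gen omega_minus"

text \<open>The map W: W_plus for x < 2, W_minus for x > 2, W p0 = p0.
  Its domain is R minus the line x = 2 except p0; outside that domain the value is irrelevant.\<close>
definition W :: "real \<times> real \<Rightarrow> real \<times> real" where
  "W z = (if z = p0 then p0 else if fst z < 2 then W_plus z else W_minus z)"

definition W_domain :: "(real \<times> real) set" where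
  "W_domain = regionR - {z. fst z = 2 \<and> z \<noteq> p0}"

definition W_orbit :: "real \<times> real \<Rightarrow> nat \<Rightarrow> real \<times> real" where
  "W_orbit z0 k = (W ^^ k) z0"

definition orbit_defined :: "real \<times> real \<Rightarrow> bool" where
  "orbit_defined z0 \<longleftrightarrow> (\<forall>k. W_orbit z0 k \<in> W_domain)"

end

theory Submission
  imports Defs
begin

definition om :: "real \<Rightarrow> real \<Rightarrow> real" where
  "om x y = (if x < 2 then omega_plus x y else omega_minus x y)"

definition EE :: "real \<Rightarrow> real \<Rightarrow> real" where
  "EE x y = 16*x^2*y^2*(x^2+4) + 64*x^4*y^4"

lemma EE_nonneg: "EE x y \<ge> 0"
  unfolding EE_def by (simp add: zero_le_even_power)

lemma Delta_eq: "Delta x y = (x^2-4)^2 + EE x y"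
  unfolding Delta_def EE_def by (simp add: power2_eq_square power4_eq_xxxx algebra_simps)

lemma Delta_nonneg: "Delta x y \<ge> 0"
  using EE_nonneg Delta_eq by (metis add_nonneg_nonneg zero_le_power2)

lemma r1_ge: "r1sq x y \<ge> 4"
  unfolding r1sq_def by (simp add: zero_le_mult_iff)

lemma W_formula: "W (x,y) = ((1 + om x y) / (1 - om x y) * x, \<bar>om x y\<bar> / (1 + om x y) * y)"
proof (cases "(x,y) = p0")
  case True
  then have "x = 2" "y = 0" by (auto simp: p0_def)
  then show ?thesis using True by (simp add: W_def om_def omega_minus_def Delta_def p0_def)
next
  case False
  then show ?thesis by (auto simp: W_def om_def W_plus_def W_minus_def W_gen_def)
qed

lemma sqrtD_ge: "sqrt (Delta x y) \<ge> \<bar>x^2-4\<bar>"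
proof -
  have "sqrt ((x^2-4)^2) \<le> sqrt (Delta x y)" using Delta_eq EE_nonneg
    by (intro real_sqrt_le_mono) simp
  then show ?thesis by simp
qed

lemma sqrtD_ge2: "sqrt (Delta x y) \<ge> sqrt (EE x y)"
  using Delta_eq by (intro real_sqrt_le_mono) simp

lemma sqrtD_le: "sqrt (Delta x y) \<le> \<bar>x^2-4\<bar> + sqrt (EE x y)"
proof -
  have "Delta x y \<le> (\<bar>x^2-4\<bar> + sqrt (EE x y))^2"
    using Delta_eq EE_nonneg by (simp add: power2_sum)
  then have "sqrt (Delta x y) \<le> sqrt ((\<bar>x^2-4\<bar> + sqrt (EE x y))^2)"
    by (rule real_sqrt_le_mono)
  then show ?thesis using EE_nonneg[of x y] by simp
qed

lemma om_id:
  assumes "x > 0"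
  shows "\<bar>om x y\<bar> * (2 * r1sq x y * (\<bar>x^2-4\<bar> + sqrt (Delta x y))) = EE x y"
proof -
  define s where "s = sqrt (Delta x y)"
  have ss: "s^2 = (x^2-4)^2 + EE x y" using Delta_nonneg Delta_eq s_def by simp
  have sge: "s \<ge> \<bar>x^2-4\<bar>" using sqrtD_ge s_def by simp
  have r: "r1sq x y > 0" using r1_ge[of x y] by simp
  show ?thesis
  proof (cases "x < 2")
    case True
    have x4: "x^2 < 4" using True assms
      by (metis abs_of_pos less_trans one_less_numeral_iff pos2 power2_less_eq_zero_iff real_sqrt_abs real_sqrt_four real_sqrt_less_iff semiring_norm(76) zero_less_abs_iff zero_less_numeral)
    have o: "om x y = (s - (4 - x^2)) / (2 * r1sq x y)" using True
      by (simp add: om_def omega_plus_def s_def)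
    have "om x y \<ge> 0" using o sge x4 r by simp
    have a: "s - (4 - x^2) \<ge> 0" using sge x4 by simp
    then have "\<bar>om x y\<bar> * (2 * r1sq x y * (\<bar>x^2-4\<bar> + s)) = (s - (4 - x^2)) * (s + (4 - x^2))"
      using o x4 r a by simp
    also have "\<dots> = EE x y" using ss by (simp add: algebra_simps power2_eq_square)
    finally show ?thesis by (simp add: s_def)
  next
    case False
    have x4: "x^2 \<ge> 4" using False
      by (metis not_less power_mono zero_le_numeral power2_eq_square num_double numeral_times_numeral)
    have o: "om x y = - ((s - (x^2 - 4)) / (2 * r1sq x y))" using False
      by (simp add: om_def omega_minus_def s_def diff_divide_distrib)
    have a: "s - (x^2 - 4) \<ge> 0" using sge x4 by simp
    then have ab: "\<bar>om x y\<bar> = (s - (x^2 - 4)) / (2 * r1sq x y)" using o r by simp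
    have "\<bar>om x y\<bar> * (2 * r1sq x y * (\<bar>x^2-4\<bar> + s)) = (s - (x^2-4)) * (s + (x^2-4))"
      unfolding ab using x4 r by simp
    also have "\<dots> = EE x y" using ss by (simp add: algebra_simps power2_eq_square)
    finally show ?thesis by (simp add: s_def)
  qed
qed

lemma om_up1: assumes "x > 0" shows "\<bar>om x y\<bar> * 8 * sqrt (EE x y) \<le> EE x y"
proof -
  have "8 * sqrt (EE x y) \<le> 2 * r1sq x y * (\<bar>x^2-4\<bar> + sqrt (Delta x y))"
  proof -
    have "sqrt (EE x y) \<le> \<bar>x^2-4\<bar> + sqrt (Delta x y)" using sqrtD_ge2[of x y] abs_ge_zero[of "x^2-4"] by linarith
    then show ?thesis using r1_ge[of x y] EE_nonneg[of x y] by (intro mult_mono) auto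
  qed
  then have "\<bar>om x y\<bar> * (8 * sqrt (EE x y)) \<le> \<bar>om x y\<bar> * (2 * r1sq x y * (\<bar>x^2-4\<bar> + sqrt (Delta x y)))"
    by (intro mult_left_mono) auto
  then show ?thesis using om_id[OF assms, of y] by simp
qed

lemma om_up2: assumes "x > 0" shows "\<bar>om x y\<bar> * 8 * \<bar>x^2-4\<bar> \<le> EE x y"
proof -
  have "8 * \<bar>x^2-4\<bar> \<le> 2 * r1sq x y * (\<bar>x^2-4\<bar> + sqrt (Delta x y))"
  proof -
    have "\<bar>x^2-4\<bar> \<le> \<bar>x^2-4\<bar> + sqrt (Delta x y)" using Delta_nonneg[of x y] by simp
    then show ?thesis using r1_ge[of x y] by (intro mult_mono) auto
  qed
  then have "\<bar>om x y\<bar> * (8 * \<bar>x^2-4\<bar>) \<le> \<bar>om x y\<bar> * (2 * r1sq x y * (\<bar>x^2-4\<bar> + sqrt (Delta x y)))"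
    by (intro mult_left_mono) auto
  then show ?thesis using om_id[OF assms, of y] by simp
qed

lemma om_low: assumes "x > 0"
  shows "EE x y \<le> \<bar>om x y\<bar> * (2 * r1sq x y * (2 * \<bar>x^2-4\<bar> + sqrt (EE x y)))"
proof -
  have "2 * r1sq x y * (\<bar>x^2-4\<bar> + sqrt (Delta x y)) \<le> 2 * r1sq x y * (2 * \<bar>x^2-4\<bar> + sqrt (EE x y))"
  proof -
    have "\<bar>x^2-4\<bar> + sqrt (Delta x y) \<le> 2 * \<bar>x^2-4\<bar> + sqrt (EE x y)" using sqrtD_le[of x y] by simp
    then show ?thesis using r1_ge[of x y] by (intro mult_left_mono) auto
  qed
  then have "\<bar>om x y\<bar> * (2 * r1sq x y * (\<bar>x^2-4\<bar> + sqrt (Delta x y))) \<le> \<bar>om x y\<bar> * (2 * r1sq x y * (2 * \<bar>x^2-4\<bar> + sqrt (EE x y)))"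
    by (rule mult_left_mono) auto
  then show ?thesis using om_id[OF assms, of y] by simp
qed

lemma EE_ge: "64 * x^2 * y^2 \<le> EE x y"
proof -
  have "64 * x^2 * y^2 \<le> 16*x^2*y^2*(x^2+4)"
    by (simp add: algebra_simps zero_le_mult_iff)
  moreover have "0 \<le> 64*x^4*y^4" by (simp add: zero_le_even_power)
  ultimately show ?thesis unfolding EE_def by linarith
qed

lemma EE_pos: "x \<noteq> 0 \<Longrightarrow> y \<noteq> 0 \<Longrightarrow> EE x y > 0"
  using EE_ge[of x y] by (smt (verit) mult_pos_pos zero_less_power2)

lemma EE_le: assumes "0 < x" "x \<le> M" "\<bar>y\<bar> \<le> 1"
  shows "EE x y \<le> (16*M^2*(M^2+4)+64*M^4) * y^2"
proof -
  have x2: "x^2 \<le> M^2" using assms by (intro power_mono) auto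
  have x4: "x^4 \<le> M^4" using assms by (intro power_mono) auto
  have y4: "y^4 \<le> y^2"
  proof -
    have "\<bar>y\<bar>^2 \<le> 1^2" using assms by (intro power_mono) auto
    then have "y^2 * y^2 \<le> 1 * y^2" by (intro mult_right_mono) auto
    then show ?thesis by (simp add: power2_eq_square power4_eq_xxxx)
  qed
  have a: "16*x^2*y^2*(x^2+4) \<le> 16*M^2*y^2*(M^2+4)"
    using x2 by (intro mult_mono) (auto simp: zero_le_mult_iff)
  have b: "64*x^4*y^4 \<le> 64*M^4*y^2"
    using x4 y4 by (intro mult_mono) (auto simp: zero_le_mult_iff)
  show ?thesis using a b unfolding EE_def by (simp add: algebra_simps)
qed

lemma om_le_lin: assumes "0 < x" "x \<le> M" "\<bar>y\<bar> \<le> 1" "y \<noteq> 0"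
  shows "\<bar>om x y\<bar> \<le> sqrt (16*M^2*(M^2+4)+64*M^4) / 8 * \<bar>y\<bar>"
proof -
  have "EE x y > 0" using EE_pos[of x y] assms by simp
  then have pe: "sqrt (EE x y) > 0" using EE_nonneg[of x y] by simp
  have "(\<bar>om x y\<bar> * 8) * sqrt (EE x y) \<le> sqrt (EE x y) * sqrt (EE x y)"
  proof -
    have "sqrt (EE x y) * sqrt (EE x y) = EE x y" using EE_nonneg[of x y] by simp
    then show ?thesis using om_up1[OF assms(1), of y] by simp
  qed
  then have "\<bar>om x y\<bar> * 8 \<le> sqrt (EE x y)" using pe by (metis mult_le_cancel_right_pos)
  also have "sqrt (EE x y) \<le> sqrt ((16*M^2*(M^2+4)+64*M^4) * y^2)"
    using EE_le[OF assms(1-3)] by (rule real_sqrt_le_mono)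
  also have "\<dots> = sqrt (16*M^2*(M^2+4)+64*M^4) * \<bar>y\<bar>" by (simp add: real_sqrt_mult)
  finally show ?thesis by simp
qed

lemma step_bounds:
  fixes w :: real
  assumes "\<bar>w\<bar> \<le> 1/2" "x > 0"
  shows "\<bar>(1+w)/(1-w)*x - x\<bar> \<le> 4*\<bar>w\<bar>*x"
    and "2/3*\<bar>w\<bar>*\<bar>y\<bar> \<le> \<bar>\<bar>w\<bar>/(1+w)*y\<bar>"
    and "\<bar>\<bar>w\<bar>/(1+w)*y\<bar> \<le> 2*\<bar>w\<bar>*\<bar>y\<bar>"
proof -
  have p1: "1 - w \<ge> 1/2" "1 + w \<ge> 1/2" "1 + w \<le> 3/2" using assms by auto
  have "(1+w)/(1-w)*x - x = 2*w*x/(1-w)" using p1 by (simp add: field_simps)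
  then have "\<bar>(1+w)/(1-w)*x - x\<bar> = 2*\<bar>w\<bar>*x/(1-w)" using p1 assms by (simp add: abs_mult)
  also have "\<dots> \<le> 2*\<bar>w\<bar>*x/(1/2)" using p1 assms
    by (intro divide_left_mono) auto
  finally show "\<bar>(1+w)/(1-w)*x - x\<bar> \<le> 4*\<bar>w\<bar>*x" by simp
  have e: "\<bar>\<bar>w\<bar>/(1+w)*y\<bar> = \<bar>w\<bar>*\<bar>y\<bar>/(1+w)" using p1 by (simp add: abs_mult)
  have "\<bar>w\<bar>*\<bar>y\<bar>/(3/2) \<le> \<bar>w\<bar>*\<bar>y\<bar>/(1+w)" using p1 by (intro divide_left_mono) auto
  then show "2/3*\<bar>w\<bar>*\<bar>y\<bar> \<le> \<bar>\<bar>w\<bar>/(1+w)*y\<bar>" using e by simp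
  have "\<bar>w\<bar>*\<bar>y\<bar>/(1+w) \<le> \<bar>w\<bar>*\<bar>y\<bar>/(1/2)" using p1 by (intro divide_left_mono) auto
  then show "\<bar>\<bar>w\<bar>/(1+w)*y\<bar> \<le> 2*\<bar>w\<bar>*\<bar>y\<bar>" using e by simp
qed

lemma om_nonneg: assumes "0 < x" "x < 2" shows "om x y \<ge> 0"
proof -
  have x4: "x^2 < 4" using assms
    by (metis abs_of_pos less_trans one_less_numeral_iff pos2 power2_less_eq_zero_iff real_sqrt_abs real_sqrt_four real_sqrt_less_iff semiring_norm(76) zero_less_abs_iff zero_less_numeral)
  have "sqrt (Delta x y) \<ge> 4 - x^2" using sqrtD_ge[of x y] x4 by simp
  then show ?thesis using assms r1_ge[of x y] by (simp add: om_def omega_plus_def)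
qed

lemma finite_fix:
  fixes y :: "nat \<Rightarrow> real"
  assumes nz: "\<forall>k. y k \<noteq> 0"
    and ev: "\<forall>k\<ge>N. c0 * \<bar>y k\<bar>^p \<le> \<bar>y (Suc k)\<bar> \<and> \<bar>y (Suc k)\<bar> \<le> C0 * \<bar>y k\<bar>^p"
    and c0: "c0 > 0" and C0: "C0 > 0"
  shows "\<exists>c C. c > 0 \<and> C > 0 \<and> (\<forall>k. c * \<bar>y k\<bar>^p \<le> \<bar>y (Suc k)\<bar> \<and> \<bar>y (Suc k)\<bar> \<le> C * \<bar>y k\<bar>^p)"
proof -
  define f where "f k = \<bar>y (Suc k)\<bar> / \<bar>y k\<bar>^p" for k
  have fpos: "f k > 0" for k using nz unfolding f_def by simp
  define c where "c = Min (insert c0 (f ` {..<N}))"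
  define C where "C = Max (insert C0 (f ` {..<N}))"
  have cpos: "c > 0" unfolding c_def using c0 fpos by (subst Min_gr_iff) auto
  have Cpos: "C > 0" unfolding C_def using C0 by (meson Max_ge finite_imageI finite_insert finite_lessThan insertI1 less_le_trans)
  have "c * \<bar>y k\<bar>^p \<le> \<bar>y (Suc k)\<bar> \<and> \<bar>y (Suc k)\<bar> \<le> C * \<bar>y k\<bar>^p" for k
  proof (cases "k < N")
    case True
    have yp: "\<bar>y k\<bar>^p > 0" using nz by simp
    have "c \<le> f k" unfolding c_def using True by (intro Min_le) auto
    moreover have "f k \<le> C" unfolding C_def using True by (intro Max_ge) auto
    ultimately show ?thesis using yp unfolding f_def by (simp add: field_simps)
  next
    case False
    have "c \<le> c0" unfolding c_def by (intro Min_le) auto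
    moreover have "C0 \<le> C" unfolding C_def by (intro Max_ge) auto
    moreover have "\<bar>y k\<bar>^p \<ge> 0" by simp
    ultimately have "c * \<bar>y k\<bar>^p \<le> c0 * \<bar>y k\<bar>^p" "C0 * \<bar>y k\<bar>^p \<le> C * \<bar>y k\<bar>^p"
      by (auto intro: mult_right_mono)
    moreover have "c0 * \<bar>y k\<bar>^p \<le> \<bar>y (Suc k)\<bar> \<and> \<bar>y (Suc k)\<bar> \<le> C0 * \<bar>y k\<bar>^p"
      using ev False by simp
    ultimately show ?thesis by linarith
  qed
  then show ?thesis using cpos Cpos by blast
qed

lemma absx24: "\<bar>(x::real)^2 - 4\<bar> = \<bar>x - 2\<bar> * \<bar>x + 2\<bar>"
proof -
  have "x^2 - 4 = (x-2)*(x+2)" by (simp add: algebra_simps power2_eq_square)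
  then show ?thesis by (simp add: abs_mult)
qed

lemma r1_le: assumes "0 < x" "x \<le> M" "\<bar>y\<bar> \<le> 1" shows "r1sq x y \<le> 4 + M^2 + 4*M^2"
proof -
  have x2: "x^2 \<le> M^2" using assms by (intro power_mono) auto
  have y2: "y^2 \<le> 1" proof -
    have "\<bar>y\<bar>^2 \<le> 1^2" using assms by (intro power_mono) auto
    then show ?thesis by simp
  qed
  have "x^2 * y^2 \<le> M^2 * 1" using x2 y2 by (intro mult_mono) auto
  then show ?thesis unfolding r1sq_def using x2 by simp
qed

lemma cubic_point:
  fixes x y m M g :: real
  defines "CE \<equiv> 16*M^2*(M^2+4)+64*M^4"
  assumes m: "0 < m" "m \<le> x" "x \<le> M" and g: "g > 0" "\<bar>x-2\<bar> \<ge> g"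
    and y: "\<bar>y\<bar> \<le> 1" "y \<noteq> 0" "CE*y^2 \<le> 8*g"
  shows "2/3 * (64*m^2 / (2*(4+M^2+4*M^2)*(2*(M^2+4)+sqrt CE))) * \<bar>y\<bar>^3 \<le> \<bar>\<bar>om x y\<bar> / (1 + om x y) * y\<bar>"
    and "\<bar>\<bar>om x y\<bar> / (1 + om x y) * y\<bar> \<le> CE / (8*g) * \<bar>y\<bar>^3"
proof -
  have x0: "x > 0" using m by simp
  have EEle: "EE x y \<le> CE * y^2" unfolding CE_def using EE_le[OF x0 m(3) y(1)] .
  have a1: "\<bar>x^2-4\<bar> \<ge> 2*g"
  proof -
    have "\<bar>x-2\<bar> * 2 \<le> \<bar>x - 2\<bar> * \<bar>x + 2\<bar>" using x0 by (intro mult_left_mono) auto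
    moreover have "2*g \<le> \<bar>x-2\<bar> * 2" using g by simp
    ultimately show ?thesis by (simp only: absx24[of x])
  qed
  have "\<bar>om x y\<bar> * 8 * (2*g) \<le> \<bar>om x y\<bar> * 8 * \<bar>x^2-4\<bar>" using a1 by (intro mult_left_mono) auto
  also have "\<dots> \<le> EE x y" using om_up2[OF x0] .
  finally have o1: "\<bar>om x y\<bar> * (16*g) \<le> CE * y^2" using EEle by linarith
  then have o2: "\<bar>om x y\<bar> \<le> CE * y^2 / (16*g)" using g by (simp add: field_simps)
  have "CE * y^2 / (16*g) \<le> 8*g / (16*g)" using y(3) g by (intro divide_right_mono) auto
  moreover have "8*g / (16*g) = 1/2" using g by simp
  ultimately have ohalf: "\<bar>om x y\<bar> \<le> 1/2" using o2 by linarith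
  note sb = step_bounds[OF ohalf x0]
  have "\<bar>\<bar>om x y\<bar> / (1 + om x y) * y\<bar> \<le> 2 * (CE * y^2 / (16*g)) * \<bar>y\<bar>"
    using sb(3) o2 by (smt (verit) abs_ge_zero mult_right_mono)
  also have "\<dots> = CE / (8*g) * \<bar>y\<bar>^3" using g by (simp add: field_simps power2_eq_square power3_eq_cube)
  finally show "\<bar>\<bar>om x y\<bar> / (1 + om x y) * y\<bar> \<le> CE / (8*g) * \<bar>y\<bar>^3" .
  define D where "D = 2*(4+M^2+4*M^2)*(2*(M^2+4)+sqrt CE)"
  have CE0: "CE \<ge> 0" unfolding CE_def by simp
  have sq: "sqrt (EE x y) \<le> sqrt CE"
  proof -
    have "y^2 \<le> 1" proof -
      have "\<bar>y\<bar>^2 \<le> 1^2" using y by (intro power_mono) auto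
      then show ?thesis by simp
    qed
    then have "CE * y^2 \<le> CE" using CE0 by (simp add: mult_left_le)
    then show ?thesis using EEle by simp
  qed
  have x2: "x^2 \<le> M^2" using m by (intro power_mono) auto
  have a2: "\<bar>x^2 - 4\<bar> \<le> M^2 + 4" using x2 zero_le_power2[of x] by linarith
  have "2 * r1sq x y * (2 * \<bar>x^2-4\<bar> + sqrt (EE x y)) \<le> D"
  proof -
    have "2 * \<bar>x^2-4\<bar> + sqrt (EE x y) \<le> 2*(M^2+4)+sqrt CE" using add_mono[OF mult_left_mono[OF a2, of 2] sq] by simp
    moreover have "0 \<le> 2 * \<bar>x^2-4\<bar> + sqrt (EE x y)" using EE_nonneg[of x y] by simp
    ultimately show ?thesis
      unfolding D_def using r1_le[OF x0 m(3) y(1)] r1_ge[of x y]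
      by (intro mult_mono) auto
  qed
  then have "\<bar>om x y\<bar> * (2 * r1sq x y * (2 * \<bar>x^2-4\<bar> + sqrt (EE x y))) \<le> \<bar>om x y\<bar> * D"
    by (rule mult_left_mono) simp
  moreover have "64 * m^2 * y^2 \<le> EE x y"
  proof -
    have "m^2 \<le> x^2" using m by (intro power_mono) auto
    then have "64 * m^2 * y^2 \<le> 64 * x^2 * y^2" by (intro mult_right_mono) auto
    then show ?thesis using EE_ge[of x y] by linarith
  qed
  ultimately have lo: "64 * m^2 * y^2 \<le> \<bar>om x y\<bar> * D" using om_low[OF x0, of y] by linarith
  have "M > 0" using m by linarith
  then have Dpos: "D > 0" unfolding D_def using CE0
    by (intro mult_pos_pos add_pos_nonneg) auto
  have "2/3 * (64*m^2 / D) * \<bar>y\<bar>^3 = 2/3 * ((64 * m^2 * y^2) / D) * \<bar>y\<bar>"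
    by (simp add: power2_eq_square power3_eq_cube)
  also have "\<dots> \<le> 2/3 * \<bar>om x y\<bar> * \<bar>y\<bar>"
    using lo Dpos by (intro mult_right_mono mult_left_mono) (auto simp: divide_le_eq)
  also have "\<dots> \<le> \<bar>\<bar>om x y\<bar> / (1 + om x y) * y\<bar>" using sb(2) .
  finally show "2/3 * (64*m^2 / (2*(4+M^2+4*M^2)*(2*(M^2+4)+sqrt CE))) * \<bar>y\<bar>^3 \<le> \<bar>\<bar>om x y\<bar> / (1 + om x y) * y\<bar>"
    unfolding D_def .
qed

lemma quad_point:
  fixes x y :: real
  assumes x: "1 \<le> x" "x \<le> 3" and y: "\<bar>y\<bar> \<le> 1/100" "y \<noteq> 0"
  shows "\<bar>\<bar>om x y\<bar> / (1 + om x y) * y\<bar> \<le> 21 * \<bar>y\<bar>^2"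
    and "\<bar>(1 + om x y) / (1 - om x y) * x - x\<bar> * \<bar>x - 2\<bar> \<le> 3528 * \<bar>y\<bar>^2"
    and "\<bar>x - 2\<bar> \<le> 146 * \<bar>y\<bar> \<Longrightarrow> 1/3600 * \<bar>y\<bar>^2 \<le> \<bar>\<bar>om x y\<bar> / (1 + om x y) * y\<bar>"
proof -
  have x0: "x > 0" using x by simp
  have y1: "\<bar>y\<bar> \<le> 1" using y by simp
  have c: "(16*3^2*(3^2+4)+64*3^4::real) = 84^2" by simp
  have o1: "\<bar>om x y\<bar> \<le> 84 / 8 * \<bar>y\<bar>" using om_le_lin[OF x0 x(2) y1 y(2)] unfolding c by simp
  then have ohalf: "\<bar>om x y\<bar> \<le> 1/2" using y by simp
  note sb = step_bounds[OF ohalf x0]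
  have "\<bar>\<bar>om x y\<bar> / (1 + om x y) * y\<bar> \<le> 2 * (84 / 8 * \<bar>y\<bar>) * \<bar>y\<bar>"
    using sb(3) o1 by (smt (verit) abs_ge_zero mult_right_mono)
  then show "\<bar>\<bar>om x y\<bar> / (1 + om x y) * y\<bar> \<le> 21 * \<bar>y\<bar>^2" by (simp add: power2_eq_square)
  have EEle: "EE x y \<le> 7056 * y^2" using EE_le[OF x0 x(2) y1] by simp
  have a1: "\<bar>x^2-4\<bar> \<ge> 3 * \<bar>x - 2\<bar>"
  proof -
    have "\<bar>x-2\<bar> * 3 \<le> \<bar>x - 2\<bar> * \<bar>x + 2\<bar>" using x by (intro mult_left_mono) auto
    then show ?thesis by (simp add: absx24[of x] mult.commute)
  qed
  have "\<bar>om x y\<bar> * 8 * (3 * \<bar>x - 2\<bar>) \<le> \<bar>om x y\<bar> * 8 * \<bar>x^2-4\<bar>" using a1 by (intro mult_left_mono) auto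
  also have "\<dots> \<le> EE x y" using om_up2[OF x0] .
  finally have o2: "\<bar>om x y\<bar> * \<bar>x - 2\<bar> * 24 \<le> 7056 * y^2" using EEle by linarith
  have "\<bar>(1 + om x y) / (1 - om x y) * x - x\<bar> * \<bar>x - 2\<bar> \<le> (4 * \<bar>om x y\<bar> * x) * \<bar>x - 2\<bar>"
    using sb(1) by (intro mult_right_mono) auto
  also have "\<dots> \<le> (4 * \<bar>om x y\<bar> * 3) * \<bar>x - 2\<bar>"
    using x by (intro mult_right_mono mult_left_mono) auto
  also have "\<dots> \<le> 3528 * \<bar>y\<bar>^2" using o2 by simp
  finally show "\<bar>(1 + om x y) / (1 - om x y) * x - x\<bar> * \<bar>x - 2\<bar> \<le> 3528 * \<bar>y\<bar>^2" .
  assume d: "\<bar>x - 2\<bar> \<le> 146 * \<bar>y\<bar>"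
  have a2: "\<bar>x^2 - 4\<bar> \<le> 730 * \<bar>y\<bar>"
  proof -
    have "\<bar>x - 2\<bar> * \<bar>x + 2\<bar> \<le> (146 * \<bar>y\<bar>) * 5" using d x by (intro mult_mono) auto
    then show ?thesis by (simp add: absx24[of x] mult.commute)
  qed
  have sq: "sqrt (EE x y) \<le> 84 * \<bar>y\<bar>"
  proof -
    have "sqrt (EE x y) \<le> sqrt (84^2 * y^2)" using EEle by (intro real_sqrt_le_mono) simp
    then show ?thesis by (simp add: real_sqrt_mult)
  qed
  have r: "r1sq x y \<le> 49" using r1_le[OF x0 x(2) y1] by simp
  have "2 * r1sq x y * (2 * \<bar>x^2-4\<bar> + sqrt (EE x y)) \<le> 2 * 49 * (1544 * \<bar>y\<bar>)"
  proof -
    have "2 * \<bar>x^2-4\<bar> + sqrt (EE x y) \<le> 2 * (730 * \<bar>y\<bar>) + 84 * \<bar>y\<bar>"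
      using add_mono[OF mult_left_mono[OF a2, of 2] sq] by simp
    then have "2 * \<bar>x^2-4\<bar> + sqrt (EE x y) \<le> 1544 * \<bar>y\<bar>" by simp
    moreover have "0 \<le> 2 * \<bar>x^2-4\<bar> + sqrt (EE x y)" using EE_nonneg[of x y] by simp
    ultimately show ?thesis using r r1_ge[of x y] by (intro mult_mono) auto
  qed
  then have "\<bar>om x y\<bar> * (2 * r1sq x y * (2 * \<bar>x^2-4\<bar> + sqrt (EE x y))) \<le> \<bar>om x y\<bar> * (151312 * \<bar>y\<bar>)"
    by (intro mult_left_mono) auto
  moreover have "64 * y^2 \<le> EE x y"
  proof -
    have "1 \<le> x^2" using x by (metis one_le_power)
    then have "64 * 1 * y^2 \<le> 64 * x^2 * y^2" by (intro mult_right_mono) auto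
    then show ?thesis using EE_ge[of x y] by linarith
  qed
  ultimately have lo: "64 * y^2 \<le> \<bar>om x y\<bar> * (151312 * \<bar>y\<bar>)" using om_low[OF x0, of y] by linarith
  have yp: "\<bar>y\<bar> > 0" using y by simp
  have lo2: "64 * \<bar>y\<bar> \<le> \<bar>om x y\<bar> * 151312"
  proof -
    have "y^2 = \<bar>y\<bar> * \<bar>y\<bar>" by (simp add: power2_eq_square abs_mult_self)
    then have "(64 * \<bar>y\<bar>) * \<bar>y\<bar> \<le> (\<bar>om x y\<bar> * 151312) * \<bar>y\<bar>" using lo by (simp add: algebra_simps)
    then show ?thesis using yp by (metis mult_le_cancel_right_pos)
  qed
  have "1/3600 * \<bar>y\<bar>^2 \<le> 2/3 * \<bar>om x y\<bar> * \<bar>y\<bar>"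
  proof -
    have h: "64 * (\<bar>y\<bar> * \<bar>y\<bar>) \<le> 151312 * (\<bar>om x y\<bar> * \<bar>y\<bar>)"
      using mult_right_mono[OF lo2, of "\<bar>y\<bar>"] by (simp add: mult.assoc mult.commute mult.left_commute)
    have lin: "64 * a \<le> 151312 * b \<Longrightarrow> 0 \<le> b \<Longrightarrow> 1/3600 * a \<le> 2/3 * b" for a b :: real by linarith
    have "1/3600 * (\<bar>y\<bar> * \<bar>y\<bar>) \<le> 2/3 * (\<bar>om x y\<bar> * \<bar>y\<bar>)" using lin[OF h] by simp
    then show ?thesis by (simp add: power2_eq_square mult.assoc)
  qed
  also have "\<dots> \<le> \<bar>\<bar>om x y\<bar> / (1 + om x y) * y\<bar>" using sb(2) .
  finally show "1/3600 * \<bar>y\<bar>^2 \<le> \<bar>\<bar>om x y\<bar> / (1 + om x y) * y\<bar>" .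
qed

lemma xs_pos:
  fixes x y :: "nat \<Rightarrow> real"
  assumes sx: "\<And>k. x (Suc k) = (1 + om (x k) (y k)) / (1 - om (x k) (y k)) * x k"
    and xp: "\<And>k. x k > 0" and lx: "x \<longlonglongrightarrow> xs"
  shows "xs > 0"
proof (rule ccontr)
  assume "\<not> xs > 0"
  then have "xs < 2" by simp
  then obtain N where N: "\<And>k. k \<ge> N \<Longrightarrow> x k < 2"
    using order_tendstoD(2)[OF lx, of 2] by (auto simp: eventually_sequentially)
  have mstep: "x k \<le> x (Suc k)" if "k \<ge> N" for k
  proof -
    have o: "om (x k) (y k) \<ge> 0" using om_nonneg[OF xp N[OF that]] .
    have q: "(1 + om (x k) (y k)) / (1 - om (x k) (y k)) > 0"
    proof -
      have "0 < (1 + om (x k) (y k)) / (1 - om (x k) (y k)) * x k" using xp[of "Suc k"] unfolding sx .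
      then show ?thesis using xp[of k] by (simp add: zero_less_mult_iff del: times_divide_eq_left)
    qed
    then have "1 - om (x k) (y k) > 0" using o by (simp add: zero_less_divide_iff)
    then have "(1 + om (x k) (y k)) / (1 - om (x k) (y k)) \<ge> 1" using o by simp
    then have "1 * x k \<le> (1 + om (x k) (y k)) / (1 - om (x k) (y k)) * x k"
      using xp[of k] by (intro mult_right_mono) auto
    then show ?thesis unfolding sx by simp
  qed
  have "x N \<le> x k" if "k \<ge> N" for k
    using that
  proof (induction k rule: dec_induct)
    case base then show ?case by simp
  next
    case (step k) then show ?case using mstep[of k] by simp
  qed
  then have "x N \<le> xs" by (intro LIMSEQ_le_const[OF lx]) auto
  then show False using xp[of N] \<open>\<not> xs > 0\<close> by simp
qed

lemma cubic_seq:
  fixes x y :: "nat \<Rightarrow> real"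
  assumes sx: "\<And>k. x (Suc k) = (1 + om (x k) (y k)) / (1 - om (x k) (y k)) * x k"
    and sy: "\<And>k. y (Suc k) = \<bar>om (x k) (y k)\<bar> / (1 + om (x k) (y k)) * y k"
    and xp: "\<And>k. x k > 0" and yn: "\<And>k. y k \<noteq> 0"
    and lx: "x \<longlonglongrightarrow> xs" and ly: "y \<longlonglongrightarrow> 0" and xs2: "xs \<noteq> 2"
  shows "\<exists>c C. c > 0 \<and> C > 0 \<and> (\<forall>k. c * \<bar>y k\<bar>^3 \<le> \<bar>y (Suc k)\<bar> \<and> \<bar>y (Suc k)\<bar> \<le> C * \<bar>y k\<bar>^3)"
proof -
  have xs0: "xs > 0" using xs_pos[OF sx xp lx] .
  define m where "m = xs / 2"
  define M where "M = xs + 1"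
  define g where "g = \<bar>xs - 2\<bar> / 2"
  define CE where "CE = 16*M^2*(M^2+4)+64*M^4"
  have m0: "m > 0" and g0: "g > 0" using xs0 xs2 by (auto simp: m_def g_def)
  have CE0: "CE > 0" using xs0 by (simp add: CE_def M_def add_pos_nonneg)
  obtain N1 where N1: "\<And>k. k \<ge> N1 \<Longrightarrow> \<bar>x k - xs\<bar> < min m (min 1 g)"
    using lx[unfolded LIMSEQ_iff, rule_format, of "min m (min 1 g)"] m0 g0 by auto
  obtain N2 where N2: "\<And>k. k \<ge> N2 \<Longrightarrow> \<bar>y k\<bar> < min 1 (8*g/CE)"
    using ly[unfolded LIMSEQ_iff, rule_format, of "min 1 (8*g/CE)"] g0 CE0 by auto
  define c0 where "c0 = 2/3 * (64*m^2 / (2*(4+M^2+4*M^2)*(2*(M^2+4)+sqrt CE)))"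
  define C0 where "C0 = CE / (8*g)"
  have "M > 0" using xs0 by (simp add: M_def)
  then have c0: "c0 > 0" unfolding c0_def using m0 CE0
    by (intro mult_pos_pos divide_pos_pos add_pos_nonneg) auto
  have C0: "C0 > 0" unfolding C0_def using CE0 g0 by simp
  have "\<forall>k\<ge>max N1 N2. c0 * \<bar>y k\<bar>^3 \<le> \<bar>y (Suc k)\<bar> \<and> \<bar>y (Suc k)\<bar> \<le> C0 * \<bar>y k\<bar>^3"
  proof (intro allI impI)
    fix k assume k: "k \<ge> max N1 N2"
    have a: "\<bar>x k - xs\<bar> < m" "\<bar>x k - xs\<bar> < 1" "\<bar>x k - xs\<bar> < g" using N1[of k] k by auto
    have b: "\<bar>y k\<bar> < 1" "\<bar>y k\<bar> < 8*g/CE" using N2[of k] k by auto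
    have mx: "m \<le> x k" using a(1) unfolding m_def by arith
    have xM: "x k \<le> M" using a(2) unfolding M_def by arith
    have gx: "g \<le> \<bar>x k - 2\<bar>"
    proof -
      have t1: "\<bar>xs - 2\<bar> \<le> \<bar>xs - x k\<bar> + \<bar>x k - 2\<bar>" using abs_triangle_ineq[of "xs - x k" "x k - 2"] by simp
      have t2: "\<bar>xs - x k\<bar> = \<bar>x k - xs\<bar>" by (rule abs_minus_commute)
      have lin: "\<And>A B C D g :: real. A \<le> B + C \<Longrightarrow> B = D \<Longrightarrow> D < g \<Longrightarrow> g = A/2 \<Longrightarrow> g \<le> C"
        by linarith
      show ?thesis by (rule lin[OF t1 t2 a(3) g_def])
    qed
    have y2: "CE * (y k)^2 \<le> 8*g"
    proof -
      have "(y k)^2 = \<bar>y k\<bar> * \<bar>y k\<bar>" by (simp add: power2_eq_square)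
      also have "\<dots> \<le> \<bar>y k\<bar> * 1" using b(1) by (intro mult_left_mono) auto
      also have "\<dots> \<le> 8*g/CE" using b(2) by simp
      finally show ?thesis using CE0 by (simp add: field_simps)
    qed
    have yk1: "\<bar>y k\<bar> \<le> 1" using b(1) by simp
    have y2': "(16*M^2*(M^2+4)+64*M^4) * (y k)^2 \<le> 8*g" using y2 unfolding CE_def .
    note cp = cubic_point[OF m0 mx xM g0 gx yk1 yn[of k] y2']
    have e: "y (Suc k) = \<bar>om (x k) (y k)\<bar> / (1 + om (x k) (y k)) * y k" by (rule sy)
    show "c0 * \<bar>y k\<bar>^3 \<le> \<bar>y (Suc k)\<bar> \<and> \<bar>y (Suc k)\<bar> \<le> C0 * \<bar>y k\<bar>^3"
      unfolding e c0_def C0_def CE_def using cp by blast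
  qed
  then show ?thesis using finite_fix[of y "max N1 N2" c0 3 C0] yn c0 C0 by blast
qed

lemma quad_seq:
  fixes x y :: "nat \<Rightarrow> real"
  assumes sx: "\<And>k. x (Suc k) = (1 + om (x k) (y k)) / (1 - om (x k) (y k)) * x k"
    and sy: "\<And>k. y (Suc k) = \<bar>om (x k) (y k)\<bar> / (1 + om (x k) (y k)) * y k"
    and xp: "\<And>k. x k > 0" and yn: "\<And>k. y k \<noteq> 0"
    and lx: "x \<longlonglongrightarrow> 2" and ly: "y \<longlonglongrightarrow> 0"
  shows "\<exists>c C. c > 0 \<and> C > 0 \<and> (\<forall>k. c * \<bar>y k\<bar>^2 \<le> \<bar>y (Suc k)\<bar> \<and> \<bar>y (Suc k)\<bar> \<le> C * \<bar>y k\<bar>^2)"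
proof -
  obtain N1a where N1a: "\<And>k. k \<ge> N1a \<Longrightarrow> \<bar>x k - 2\<bar> < 1"
    using lx[unfolded LIMSEQ_iff, rule_format, of 1] by auto
  obtain N1b where N1b: "\<And>k. k \<ge> N1b \<Longrightarrow> \<bar>y k\<bar> < 1/100"
    using ly[unfolded LIMSEQ_iff, rule_format, of "1/100"] by auto
  define N1 where "N1 = max N1a N1b"
  have pt: "1 \<le> x k \<and> x k \<le> 3 \<and> \<bar>y k\<bar> \<le> 1/100" if "k \<ge> N1" for k
    using N1a[of k] N1b[of k] that unfolding N1_def by arith
  have Q1: "\<bar>y (Suc k)\<bar> \<le> 21 * \<bar>y k\<bar>^2" if "k \<ge> N1" for k
    unfolding sy using quad_point(1)[of "x k" "y k"] pt[OF that] yn[of k] by blast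
  have Q2: "\<bar>x (Suc k) - x k\<bar> * \<bar>x k - 2\<bar> \<le> 3528 * \<bar>y k\<bar>^2" if "k \<ge> N1" for k
    unfolding sx using quad_point(2)[of "x k" "y k"] pt[OF that] yn[of k] by blast
  have Q3: "1/3600 * \<bar>y k\<bar>^2 \<le> \<bar>y (Suc k)\<bar>" if "k \<ge> N1" "\<bar>x k - 2\<bar> \<le> 146 * \<bar>y k\<bar>" for k
    unfolding sy using quad_point(3)[of "x k" "y k"] pt[OF that(1)] yn[of k] that(2) by blast
  have Q4: "\<bar>y (Suc k)\<bar>^2 \<le> \<bar>y k\<bar>^2 / 4" if "k \<ge> N1" for k
  proof -
    have "21 * \<bar>y k\<bar>^2 = (21 * \<bar>y k\<bar>) * \<bar>y k\<bar>" by (simp add: power2_eq_square)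
    also have "\<dots> \<le> (1/2) * \<bar>y k\<bar>" using pt[OF that] by (intro mult_right_mono) auto
    finally have "\<bar>y (Suc k)\<bar> \<le> \<bar>y k\<bar> / 2" using Q1[OF that] by simp
    then have "\<bar>y (Suc k)\<bar>^2 \<le> (\<bar>y k\<bar> / 2)^2" by (intro power_mono) auto
    then show ?thesis by (simp add: power_divide)
  qed
  define A :: real where "A = 10584"
  have key: "\<bar>x k - 2\<bar> \<le> 146 * \<bar>y k\<bar>" if k: "k \<ge> N1" for k
  proof (rule ccontr)
    assume "\<not> \<bar>x k - 2\<bar> \<le> 146 * \<bar>y k\<bar>"
    then have big: "146 * \<bar>y k\<bar> < \<bar>x k - 2\<bar>" by simp
    define \<delta> where "\<delta> = \<bar>x k - 2\<bar>"
    have dpos: "\<delta> > 0" using big yn[of k] unfolding \<delta>_def by (smt (verit) zero_less_abs_iff)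
    define \<Phi> where "\<Phi> j = \<bar>x j - 2\<bar> - A * \<bar>y j\<bar>^2 / \<delta>" for j
    have inv: "\<Phi> j \<ge> \<delta> / 2" if "j \<ge> k" for j
      using that
    proof (induction j rule: dec_induct)
      case base
      have "(146 * \<bar>y k\<bar>)^2 \<le> \<delta>^2" using big unfolding \<delta>_def by (intro power_mono) auto
      then have h: "21316 * (y k * y k) \<le> \<delta> * \<delta>" by (simp add: power2_eq_square)
      have "0 \<le> y k * y k" by simp
      then have "21168 * (y k * y k) \<le> \<delta> * \<delta>" using h by linarith
      then have "2 * A * \<bar>y k\<bar>^2 \<le> \<delta> * \<delta>" unfolding A_def by (simp add: power2_eq_square)
      then have "A * \<bar>y k\<bar>^2 / \<delta> \<le> \<delta> / 2" using dpos by (simp add: field_simps)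
      then show ?case unfolding \<Phi>_def \<delta>_def by simp
    next
      case (step j)
      have j: "j \<ge> N1" using step.hyps k by simp
      define u where "u = \<bar>y j\<bar>^2 / \<delta>"
      define v where "v = \<bar>y (Suc j)\<bar>^2 / \<delta>"
      define dj where "dj = \<bar>x j - 2\<bar>"
      define dj' where "dj' = \<bar>x (Suc j) - 2\<bar>"
      define st where "st = \<bar>x (Suc j) - x j\<bar>"
      have u0: "u \<ge> 0" unfolding u_def using dpos by simp
      have vu: "v \<le> u / 4"
      proof -
        have "\<bar>y (Suc j)\<bar>^2 / \<delta> \<le> (\<bar>y j\<bar>^2 / 4) / \<delta>" using Q4[OF j] dpos by (intro divide_right_mono) auto
        then show ?thesis unfolding u_def v_def by simp
      qed
      have Pj: "\<Phi> j = dj - A * u" unfolding \<Phi>_def dj_def u_def by simp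
      have Pj': "\<Phi> (Suc j) = dj' - A * v" unfolding \<Phi>_def dj'_def v_def by simp
      have "A * u \<ge> 0" using u0 unfolding A_def by simp
      then have djb: "dj \<ge> \<delta> / 2" using step.IH Pj by linarith
      have tri: "dj' \<ge> dj - st"
      proof -
        have "\<bar>x j - 2\<bar> \<le> \<bar>x (Suc j) - 2\<bar> + \<bar>x j - x (Suc j)\<bar>"
          using abs_triangle_ineq[of "x (Suc j) - 2" "x j - x (Suc j)"] by simp
        then show ?thesis unfolding dj_def dj'_def st_def by (simp add: abs_minus_commute)
      qed
      have stb: "st \<le> 7056 * u"
      proof -
        have "st * dj \<le> 3528 * \<bar>y j\<bar>^2" using Q2[OF j] unfolding st_def dj_def .
        moreover have "st * (\<delta>/2) \<le> st * dj" using djb unfolding st_def by (intro mult_left_mono) auto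
        ultimately have "st * \<delta> \<le> 7056 * \<bar>y j\<bar>^2" by simp
        then show ?thesis unfolding u_def using dpos by (simp add: field_simps)
      qed
      have "\<Phi> (Suc j) \<ge> \<Phi> j" unfolding Pj Pj' using tri stb vu u0 unfolding A_def by linarith
      then show ?case using step.IH by linarith
    qed
    obtain N2 where N2: "\<And>j. j \<ge> N2 \<Longrightarrow> \<bar>x j - 2\<bar> < \<delta> / 2"
      using lx[unfolded LIMSEQ_iff, rule_format, of "\<delta>/2"] dpos by auto
    define j where "j = max k N2"
    have "\<Phi> j \<ge> \<delta> / 2" using inv[of j] unfolding j_def by simp
    moreover have "A * \<bar>y j\<bar>^2 / \<delta> \<ge> 0" using dpos unfolding A_def by simp
    moreover have "\<bar>x j - 2\<bar> < \<delta> / 2" using N2[of j] unfolding j_def by simp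
    ultimately show False unfolding \<Phi>_def by linarith
  qed
  have "\<forall>k\<ge>N1. 1/3600 * \<bar>y k\<bar>^2 \<le> \<bar>y (Suc k)\<bar> \<and> \<bar>y (Suc k)\<bar> \<le> 21 * \<bar>y k\<bar>^2"
    using Q1 Q3 key by blast
  then show ?thesis using finite_fix[of y N1 "1/3600" 2 21] yn by simp
qed

lemma orbit_props:
  assumes y0: "snd z0 \<noteq> 0" and od: "orbit_defined z0"
  shows "\<And>k. fst (W_orbit z0 (Suc k)) = (1 + om (fst (W_orbit z0 k)) (snd (W_orbit z0 k))) / (1 - om (fst (W_orbit z0 k)) (snd (W_orbit z0 k))) * fst (W_orbit z0 k)"
    and "\<And>k. snd (W_orbit z0 (Suc k)) = \<bar>om (fst (W_orbit z0 k)) (snd (W_orbit z0 k))\<bar> / (1 + om (fst (W_orbit z0 k)) (snd (W_orbit z0 k))) * snd (W_orbit z0 k)"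
    and "\<And>k. fst (W_orbit z0 k) > 0"
    and "\<And>k. snd (W_orbit z0 k) \<noteq> 0"
proof -
  define x where "x k = fst (W_orbit z0 k)" for k
  define y where "y k = snd (W_orbit z0 k)" for k
  have e: "W_orbit z0 (Suc k) = W (x k, y k)" for k
    unfolding x_def y_def W_orbit_def by simp
  show sx: "x (Suc k) = (1 + om (x k) (y k)) / (1 - om (x k) (y k)) * x k" for k
    using e[of k] unfolding W_formula by (simp add: x_def)
  show sy: "y (Suc k) = \<bar>om (x k) (y k)\<bar> / (1 + om (x k) (y k)) * y k" for k
    using e[of k] unfolding W_formula by (simp add: y_def)
  show xp: "x k > 0" for k
    using od unfolding orbit_defined_def W_domain_def regionR_def x_def
    by (metis (mono_tags, lifting) DiffD1 case_prodD mem_Collect_eq prod.collapse)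
  show "y k \<noteq> 0" for k
  proof (induction k)
    case 0 then show ?case using y0 by (simp add: y_def W_orbit_def)
  next
    case (Suc k)
    have "om (x k) (y k) \<noteq> 0"
    proof
      assume "om (x k) (y k) = 0"
      then have "EE (x k) (y k) = 0" using om_id[OF xp[of k], of "y k"] by simp
      then show False using EE_pos[of "x k" "y k"] xp[of k] Suc by simp
    qed
    moreover have "1 + om (x k) (y k) \<noteq> 0"
    proof
      assume "1 + om (x k) (y k) = 0"
      then have "x (Suc k) = 0" using sx[of k] by simp
      then show False using xp[of "Suc k"] by simp
    qed
    ultimately show ?case using sy[of k] Suc by simp
  qed
qed

theorem proposition5p5:
  shows
  "(\<forall>z0 :: real \<times> real.
      snd z0 \<noteq> 0 \<and> orbit_defined z0 \<and> W_orbit z0 \<longlonglongrightarrow> p0 \<longrightarrow>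
      (\<exists>c C. c > 0 \<and> C > 0 \<and>
        (\<forall>k. c * \<bar>snd (W_orbit z0 k)\<bar>^2 \<le> \<bar>snd (W_orbit z0 (Suc k))\<bar> \<and>
             \<bar>snd (W_orbit z0 (Suc k))\<bar> \<le> C * \<bar>snd (W_orbit z0 k)\<bar>^2)))
   \<and>
   (\<forall>(z0 :: real \<times> real) (xs :: real).
      z0 \<in> regionR \<and> snd z0 \<noteq> 0 \<and> orbit_defined z0 \<and> xs \<noteq> 2 \<and>
      W_orbit z0 \<longlonglongrightarrow> (xs, 0) \<longrightarrow>
      (\<exists>c C. c > 0 \<and> C > 0 \<and>
        (\<forall>k. c * \<bar>snd (W_orbit z0 k)\<bar>^3 \<le> \<bar>snd (W_orbit z0 (Suc k))\<bar> \<and>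
             \<bar>snd (W_orbit z0 (Suc k))\<bar> \<le> C * \<bar>snd (W_orbit z0 k)\<bar>^3)))"
proof (intro conjI allI impI)
  fix z0 :: "real \<times> real"
  assume h: "snd z0 \<noteq> 0 \<and> orbit_defined z0 \<and> W_orbit z0 \<longlonglongrightarrow> p0"
  note op = orbit_props[of z0]
  have lx: "(\<lambda>k. fst (W_orbit z0 k)) \<longlonglongrightarrow> 2"
    using tendsto_fst[OF h[THEN conjunct2, THEN conjunct2]] by (simp add: p0_def)
  have ly: "(\<lambda>k. snd (W_orbit z0 k)) \<longlonglongrightarrow> 0"
    using tendsto_snd[OF h[THEN conjunct2, THEN conjunct2]] by (simp add: p0_def)
  show "\<exists>c C. c > 0 \<and> C > 0 \<and>
        (\<forall>k. c * \<bar>snd (W_orbit z0 k)\<bar>^2 \<le> \<bar>snd (W_orbit z0 (Suc k))\<bar> \<and>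
             \<bar>snd (W_orbit z0 (Suc k))\<bar> \<le> C * \<bar>snd (W_orbit z0 k)\<bar>^2)"
    using quad_seq[where x = "\<lambda>k. fst (W_orbit z0 k)" and y = "\<lambda>k. snd (W_orbit z0 k)", OF op(1) op(2) op(3) op(4) lx ly] h
    by blast
next
  fix z0 :: "real \<times> real" and xs :: real
  assume h: "z0 \<in> regionR \<and> snd z0 \<noteq> 0 \<and> orbit_defined z0 \<and> xs \<noteq> 2 \<and> W_orbit z0 \<longlonglongrightarrow> (xs, 0)"
  then have h1: "snd z0 \<noteq> 0" "orbit_defined z0" "xs \<noteq> 2" and h2: "W_orbit z0 \<longlonglongrightarrow> (xs, 0)" by auto
  note op = orbit_props[OF h1(1,2)]
  have lx: "(\<lambda>k. fst (W_orbit z0 k)) \<longlonglongrightarrow> xs"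
    using tendsto_fst[OF h2] by simp
  have ly: "(\<lambda>k. snd (W_orbit z0 k)) \<longlonglongrightarrow> 0"
    using tendsto_snd[OF h2] by simp
  show "\<exists>c C. c > 0 \<and> C > 0 \<and>
        (\<forall>k. c * \<bar>snd (W_orbit z0 k)\<bar>^3 \<le> \<bar>snd (W_orbit z0 (Suc k))\<bar> \<and>
             \<bar>snd (W_orbit z0 (Suc k))\<bar> \<le> C * \<bar>snd (W_orbit z0 k)\<bar>^3)"
    using cubic_seq[where x = "\<lambda>k. fst (W_orbit z0 k)" and y = "\<lambda>k. snd (W_orbit z0 k)", OF op(1) op(2) op(3) op(4) lx ly h1(3)]
    by blast
qed

end
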